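(* Let $(X,\mathcal T,P,\leq,\{\sigma_x:x\in X\})$ be a typed topological space with $X$ finite, let $p\in P$, and assume $\sigma$ has least $p$-neighborhood. Let $y\neq z\in X$ satisfy $z\notin p\vdash tr(\{y\})$ and $y\notin p\vdash tr(\{z\})$, and let $S$ be the $p$-surgery on $(z,y)$. Then (1) $p\vdash_S tr(\{y\})=p\vdash tr(\{y\})$; (2) $p\vdash_S tr(\{z\})\cap p\vdash_S tr(\{y\})=\emptyset$; and (3) $p\vdash_S tr(\{y\})\cup p\vdash_S tr(\{z\})=p\vdash tr(\{y\})\cup p\vdash tr(\{z\})$.
   Context: A typed topological space $(X,\mathcal T,P,\leq,\{\sigma_x:x\in X\})$ consists of a topological space $(X,\mathcal T)$, a partially ordered set $(P,\leq)$ of types, and for each $x\in X$ a partial function $\sigma_x:\{O\in\mathcal T:x\in O\}\to P$ such that for all $U,V$ in its domain, $\sigma_x(U)\leq\sigma_x(V)$ iff $U\subseteq V$. $U$ is a type-$p$ neighborhood of $x$ if $U$ is in the domain of $\sigma_x$ and $\sigma_x(U)=p$. $\sigma$ has least $p$-neighborhood if every $x$ has a type-$p$ neighborhood $p\vdash U_{min}(x)$ contained in all its type-$p$ neighborhoods; then $x$ is a $p$-accumulation point of $A$ iff $p\vdash U_{min}(x)\cap A\neq\emptyset$. $p\vdash CL_1(A)=A\cup\{p\text{-accumulation points of }A\}$, $p\vdash CL_n(A)=p\vdash CL_1(p\vdash CL_{n-1}(A))$, $p\vdash tr(A)=\bigcup_{n\ge1}p\vdash CL_n(A)$. The $p$-surgery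 $S$ on $(z,y)$ (defined when $z\notin p\vdash tr(\{y\})$ and $y\notin p\vdash tr(\{z\})$) modifies, for each $w\in p\vdash tr(\{y\})\cap p\vdash tr(\{z\})$, the least neighborhood to $p\vdash_S U_{min}(w):=p\vdash U_{min}(w)\setminus\big(p\vdash tr(\{z\})\setminus p\vdash tr(\{y\})\big)$, leaving all other least $p$-neighborhoods unchanged. In the modified space, a point $x$ is a $p$-accumulation point of $A$ iff its (possibly modified) least $p$-neighborhood meets $A$, and $p\vdash_S CL_n$, $p\vdash_S tr$ denote the closures computed in this modified space. *)

theory Defs
  imports "HOL-Analysis.Analysis"
begin

definition typed_top_space ::
  "'a topology \<Rightarrow> 'p set \<Rightarrow> ('p \<Rightarrow> 'p \<Rightarrow> bool) \<Rightarrow> ('a \<Rightarrow> 'a set \<Rightarrow> 'p option) \<Rightarrow> bool" where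
  "typed_top_space T P le \<sigma> \<longleftrightarrow>
     (\<forall>p\<in>P. le p p) \<and>
     (\<forall>p\<in>P. \<forall>q\<in>P. le p q \<and> le q p \<longrightarrow> p = q) \<and>
     (\<forall>p\<in>P. \<forall>q\<in>P. \<forall>r\<in>P. le p q \<and> le q r \<longrightarrow> le p r) \<and>
     (\<forall>x\<in>topspace T. \<forall>U. \<sigma> x U \<noteq> None \<longrightarrow> openin T U \<and> x \<in> U \<and> the (\<sigma> x U) \<in> P) \<and>
     (\<forall>x\<in>topspace T. \<forall>U V. \<sigma> x U \<noteq> None \<longrightarrow> \<sigma> x V \<noteq> None \<longrightarrow>
         (le (the (\<sigma> x U)) (the (\<sigma> x V)) \<longleftrightarrow> U \<subseteq> V))"

text \<open>U is a type-p neighbourhood of x iff sigma x U = Some p.\<close>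

definition has_least_nbhd :: "'a topology \<Rightarrow> ('a \<Rightarrow> 'a set \<Rightarrow> 'p option) \<Rightarrow> 'p \<Rightarrow> bool" where
  "has_least_nbhd T \<sigma> p \<longleftrightarrow>
     (\<forall>x\<in>topspace T. \<exists>U. \<sigma> x U = Some p \<and> (\<forall>V. \<sigma> x V = Some p \<longrightarrow> U \<subseteq> V))"

definition Umin :: "('a \<Rightarrow> 'a set \<Rightarrow> 'p option) \<Rightarrow> 'p \<Rightarrow> 'a \<Rightarrow> 'a set" where
  "Umin \<sigma> p x = (THE U. \<sigma> x U = Some p \<and> (\<forall>V. \<sigma> x V = Some p \<longrightarrow> U \<subseteq> V))"

text \<open>Closures computed w.r.t. an assignment N of least p-neighbourhoods to points of X.\<close>

definition acc_pts :: "'a set \<Rightarrow> ('a \<Rightarrow> 'a set) \<Rightarrow> 'a set \<Rightarrow> 'a set" where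
  "acc_pts X N A = {x \<in> X. N x \<inter> A \<noteq> {}}"

definition CL1 :: "'a set \<Rightarrow> ('a \<Rightarrow> 'a set) \<Rightarrow> 'a set \<Rightarrow> 'a set" where
  "CL1 X N A = A \<union> acc_pts X N A"

definition CLn :: "'a set \<Rightarrow> ('a \<Rightarrow> 'a set) \<Rightarrow> nat \<Rightarrow> 'a set \<Rightarrow> 'a set" where
  "CLn X N n A = (CL1 X N ^^ n) A"

definition tr :: "'a set \<Rightarrow> ('a \<Rightarrow> 'a set) \<Rightarrow> 'a set \<Rightarrow> 'a set" where
  "tr X N A = (\<Union>n\<in>{1..}. CLn X N n A)"

text \<open>The p-surgery on (z,y): modified least p-neighbourhood assignment.\<close>

definition surgery_nbhd :: "'a set \<Rightarrow> ('a \<Rightarrow> 'a set) \<Rightarrow> 'a \<Rightarrow> 'a \<Rightarrow> 'a \<Rightarrow> 'a set" where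
  "surgery_nbhd X N z y w =
     (if w \<in> tr X N {y} \<inter> tr X N {z}
      then N w - (tr X N {z} - tr X N {y})
      else N w)"

end

theory Submission
  imports Defs
begin

lemma CLn_Suc: "CLn X N (Suc n) A = CL1 X N (CLn X N n A)"
  by (simp add: CLn_def)

lemma tr_incl: "A \<subseteq> tr X N A"
proof
  fix a assume "a \<in> A"
  hence "a \<in> CLn X N 1 A" by (simp add: CLn_def CL1_def)
  thus "a \<in> tr X N A" unfolding tr_def by force
qed

lemma tr_closed:
  assumes "x \<in> X" "w \<in> N x" "w \<in> tr X N A"
  shows "x \<in> tr X N A"
proof -
  obtain n where n: "n \<ge> 1" "w \<in> CLn X N n A" using assms(3) unfolding tr_def by auto
  hence "x \<in> CLn X N (Suc n) A" using assms(1,2)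
    by (auto simp: CLn_Suc CL1_def acc_pts_def)
  thus ?thesis unfolding tr_def using n(1) by force
qed

lemma tr_least:
  assumes "A \<subseteq> B" "\<And>x w. x \<in> X \<Longrightarrow> w \<in> N x \<Longrightarrow> w \<in> B \<Longrightarrow> x \<in> B"
  shows "tr X N A \<subseteq> B"
proof -
  have "CLn X N n A \<subseteq> B" for n
  proof (induction n)
    case 0 then show ?case using assms(1) by (simp add: CLn_def)
  next
    case (Suc n) then show ?case using assms(2)
      by (auto simp: CLn_Suc CL1_def acc_pts_def)
  qed
  thus ?thesis unfolding tr_def by auto
qed

lemma main:
  fixes X :: "'a set" and N :: "'a \<Rightarrow> 'a set" and y z :: 'a
  defines "N' \<equiv> surgery_nbhd X N z y"
  assumes zy: "z \<notin> tr X N {y}" and yz: "y \<notin> tr X N {z}"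
  shows "tr X N' {y} = tr X N {y} \<and> tr X N' {z} \<inter> tr X N' {y} = {} \<and>
         tr X N' {y} \<union> tr X N' {z} = tr X N {y} \<union> tr X N {z}"
proof -
  define Y where "Y = tr X N {y}"
  define Z where "Z = tr X N {z}"
  have N'sub: "N' x \<subseteq> N x" for x by (auto simp: N'_def surgery_nbhd_def)
  have N'Y: "N' x = N x - (Z - Y)" if "x \<in> Y" "x \<in> Z" for x
    using that by (simp add: N'_def surgery_nbhd_def Y_def Z_def)
  have N'nY: "N' x = N x" if "x \<notin> Y" for x
    using that by (simp add: N'_def surgery_nbhd_def Y_def Z_def)
  have N'nZ: "N' x = N x" if "x \<notin> Z" for x
    using that by (simp add: N'_def surgery_nbhd_def Y_def Z_def)
  have Yc: "x \<in> Y" if "x \<in> X" "w \<in> N x" "w \<in> Y" for x w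
    using tr_closed that unfolding Y_def by metis
  have Zc: "x \<in> Z" if "x \<in> X" "w \<in> N x" "w \<in> Z" for x w
    using tr_closed that unfolding Z_def by metis
  have Y'c: "x \<in> tr X N' {y}" if "x \<in> X" "w \<in> N' x" "w \<in> tr X N' {y}" for x w
    using tr_closed that by metis
  have Z'c: "x \<in> tr X N' {z}" if "x \<in> X" "w \<in> N' x" "w \<in> tr X N' {z}" for x w
    using tr_closed that by metis
  have y': "y \<in> tr X N' {y}" using tr_incl[of "{y}" X N'] by blast
  have z': "z \<in> tr X N' {z}" using tr_incl[of "{z}" X N'] by blast
  have yY: "y \<in> Y" using tr_incl[of "{y}"] Y_def by blast
  have zZ: "z \<in> Z" using tr_incl[of "{z}"] Z_def by blast
  have s1: "tr X N' {y} \<subseteq> Y"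
    by (rule tr_least) (use yY Yc N'sub in auto)
  have s2: "Y \<subseteq> tr X N' {y}"
    unfolding Y_def
  proof (rule tr_least)
    show "{y} \<subseteq> tr X N' {y}" using y' by auto
  next
    fix x w assume x: "x \<in> X" "w \<in> N x" "w \<in> tr X N' {y}"
    hence "w \<in> Y" using s1 by auto
    hence "w \<in> N' x" using x N'Y N'nY N'nZ by (cases "x \<in> Y \<and> x \<in> Z") auto
    thus "x \<in> tr X N' {y}" using Y'c x by blast
  qed
  have E1: "tr X N' {y} = Y" using s1 s2 by auto
  have s3: "tr X N' {z} \<subseteq> Z"
    by (rule tr_least) (use zZ Zc N'sub in auto)
  have s4: "Z \<subseteq> Y \<union> tr X N' {z}"
    unfolding Z_def
  proof (rule tr_least)
    show "{z} \<subseteq> Y \<union> tr X N' {z}" using z' by auto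
  next
    fix x w assume x: "x \<in> X" "w \<in> N x" "w \<in> Y \<union> tr X N' {z}"
    show "x \<in> Y \<union> tr X N' {z}"
    proof (cases "x \<in> Y")
      case False
      hence "N' x = N x" using N'nY by auto
      then show ?thesis using x Z'c Yc False by blast
    qed simp
  qed
  have s5: "tr X N' {z} \<subseteq> tr X N' {z} - Y"
  proof (rule tr_least)
    show "{z} \<subseteq> tr X N' {z} - Y" using z' zy Y_def by auto
  next
    fix x w assume x: "x \<in> X" "w \<in> N' x" "w \<in> tr X N' {z} - Y"
    have xz: "x \<in> tr X N' {z}" using x Z'c by blast
    show "x \<in> tr X N' {z} - Y"
    proof (rule ccontr)
      assume "x \<notin> tr X N' {z} - Y"
      hence "x \<in> Y" using xz by auto
      moreover have "x \<in> Z" using xz s3 by auto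
      ultimately have "N' x = N x - (Z - Y)" using N'Y by auto
      moreover have "w \<in> Z - Y" using x s3 by auto
      ultimately show False using x by auto
    qed
  qed
  show ?thesis
  proof (intro conjI)
    show "tr X N' {y} = tr X N {y}" using E1 Y_def by simp
    show "tr X N' {z} \<inter> tr X N' {y} = {}" using s5 E1 by auto
    show "tr X N' {y} \<union> tr X N' {z} = tr X N {y} \<union> tr X N {z}"
      using E1 s3 s4 Y_def Z_def by auto
  qed
qed

theorem proposition3p13:
  fixes T :: "'a topology" and P :: "'p set" and le :: "'p \<Rightarrow> 'p \<Rightarrow> bool"
    and \<sigma> :: "'a \<Rightarrow> 'a set \<Rightarrow> 'p option" and p :: 'p and y z :: 'a
  assumes "typed_top_space T P le \<sigma>"
    and "finite (topspace T)"
    and "p \<in> P"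
    and "has_least_nbhd T \<sigma> p"
    and "y \<in> topspace T" and "z \<in> topspace T" and "y \<noteq> z"
    and "z \<notin> tr (topspace T) (Umin \<sigma> p) {y}"
    and "y \<notin> tr (topspace T) (Umin \<sigma> p) {z}"
  shows "(tr (topspace T) (surgery_nbhd (topspace T) (Umin \<sigma> p) z y) {y}
           = tr (topspace T) (Umin \<sigma> p) {y}) \<and>
    (tr (topspace T) (surgery_nbhd (topspace T) (Umin \<sigma> p) z y) {z}
           \<inter> tr (topspace T) (surgery_nbhd (topspace T) (Umin \<sigma> p) z y) {y} = {}) \<and>
    (tr (topspace T) (surgery_nbhd (topspace T) (Umin \<sigma> p) z y) {y}
           \<union> tr (topspace T) (surgery_nbhd (topspace T) (Umin \<sigma> p) z y) {z}
         = tr (topspace T) (Umin \<sigma> p) {y} \<union> tr (topspace T) (Umin \<sigma> p) {z})"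
  using main[OF assms(8,9)] by blast

end
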